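(* Let $\Sigma$ be a flag complex on the vertex set $[n]$ and let $\ell$ be a positive integer. Let $\Delta$ and $\Delta'$ be the simplicial complexes (collections of subsets of $[n]$ closed under taking subsets) whose Stanley–Reisner ideals are $I_\Delta=I(\overline{\mathrm{skel}_\Sigma(\ell)})$ and $I_{\Delta'}=I(\overline{\mathrm{skel}_\Sigma(1)})$. Then $\Delta^\vee=\mathrm{skel}_{(\Delta')^\vee}(n-\ell-2)$.
   Context: $S=K[x_1,\ldots,x_n]$, $x_F=\prod_{i\in F}x_i$. For a simplicial complex $\Gamma$, the Stanley–Reisner ideal $I_\Gamma$ is generated by all $x_F$ with $F\notin\Gamma$, and the facet ideal $I(\Gamma)$ is generated by the $x_F$ with $F$ a facet (maximal face) of $\Gamma$. $\Sigma$ is flag if all its minimal nonfaces have exactly two elements (the full simplex is also considered flag). $\mathrm{skel}_\Gamma(i)$ is the complex whose facets are the $i$-dimensional faces of $\Gamma$ (dimension of $F$ is $|F|-1$). For $k\ge1$, $\overline{\mathrm{skel}_\Sigma(k)}$ is the complex whose facets are the $(k+1)$-element subsets of $[n]$ not belonging to $\Sigma$; thus $I(\overline{\mathrm{skel}_\Sigma(k)})$ is generated by $x_F$ for $F\subseteq[n]$, $|F|=k+1$, $F\notin\Sigma$. The Alexander dual is $\Gamma^\vee=\{[n]\setminus F: F\subseteq[n],\ F\notin\Gamma\}$. *)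

theory Defs
  imports Main
begin

definition simplicial_complex :: "nat \<Rightarrow> nat set set \<Rightarrow> bool" where
  "simplicial_complex n \<Gamma> \<longleftrightarrow>
     (\<forall>F\<in>\<Gamma>. F \<subseteq> {1..n}) \<and> (\<forall>F\<in>\<Gamma>. \<forall>G. G \<subseteq> F \<longrightarrow> G \<in> \<Gamma>)"

definition min_nonface :: "nat \<Rightarrow> nat set set \<Rightarrow> nat set \<Rightarrow> bool" where
  "min_nonface n \<Gamma> F \<longleftrightarrow> F \<subseteq> {1..n} \<and> F \<notin> \<Gamma> \<and> (\<forall>G. G \<subset> F \<longrightarrow> G \<in> \<Gamma>)"

definition flag :: "nat \<Rightarrow> nat set set \<Rightarrow> bool" where
  "flag n \<Sigma> \<longleftrightarrow> (\<forall>F. min_nonface n \<Sigma> F \<longrightarrow> card F = 2)"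

definition facets :: "nat set set \<Rightarrow> nat set set" where
  "facets \<Gamma> = {F \<in> \<Gamma>. \<forall>G\<in>\<Gamma>. F \<subseteq> G \<longrightarrow> G = F}"

definition gen_complex :: "nat set set \<Rightarrow> nat set set" where
  "gen_complex \<F> = {G. \<exists>F\<in>\<F>. G \<subseteq> F}"

definition skel :: "nat set set \<Rightarrow> int \<Rightarrow> nat set set" where
  "skel \<Gamma> i = gen_complex {F \<in> \<Gamma>. int (card F) = i + 1}"

text \<open>overline skel_Sigma(k): facets are the (k+1)-subsets of [n] not in Sigma.\<close>
definition coskel :: "nat \<Rightarrow> nat set set \<Rightarrow> nat \<Rightarrow> nat set set" where
  "coskel n \<Sigma> k = gen_complex {F. F \<subseteq> {1..n} \<and> card F = k + 1 \<and> F \<notin> \<Sigma>}"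

definition alexander_dual :: "nat \<Rightarrow> nat set set \<Rightarrow> nat set set" where
  "alexander_dual n \<Gamma> = {{1..n} - F | F. F \<subseteq> {1..n} \<and> F \<notin> \<Gamma>}"

text \<open>A monomial is an exponent vector supported in [n]. A monomial ideal is determined by
  the set of monomials it contains, so ideals are compared via these sets.\<close>

definition monomial :: "nat \<Rightarrow> (nat \<Rightarrow> nat) \<Rightarrow> bool" where
  "monomial n m \<longleftrightarrow> (\<forall>i. m i \<noteq> 0 \<longrightarrow> i \<in> {1..n})"

definition xF :: "nat set \<Rightarrow> (nat \<Rightarrow> nat)" where
  "xF F = (\<lambda>i. if i \<in> F then 1 else 0)"

definition mdvd :: "(nat \<Rightarrow> nat) \<Rightarrow> (nat \<Rightarrow> nat) \<Rightarrow> bool" where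
  "mdvd a b \<longleftrightarrow> (\<forall>i. a i \<le> b i)"

definition monomial_ideal :: "nat \<Rightarrow> (nat \<Rightarrow> nat) set \<Rightarrow> (nat \<Rightarrow> nat) set" where
  "monomial_ideal n gens = {m. monomial n m \<and> (\<exists>g\<in>gens. mdvd g m)}"

definition SR_ideal :: "nat \<Rightarrow> nat set set \<Rightarrow> (nat \<Rightarrow> nat) set" where
  "SR_ideal n \<Gamma> = monomial_ideal n {xF F | F. F \<subseteq> {1..n} \<and> F \<notin> \<Gamma>}"

definition facet_ideal :: "nat \<Rightarrow> nat set set \<Rightarrow> (nat \<Rightarrow> nat) set" where
  "facet_ideal n \<Gamma> = monomial_ideal n {xF F | F. F \<in> facets \<Gamma>}"

end

theory Submission
  imports Defs
begin

lemma mdvd_xF: "mdvd (xF G) (xF F) \<longleftrightarrow> G \<subseteq> F"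
  unfolding mdvd_def xF_def
proof
  assume h: "\<forall>i. (if i \<in> G then 1 else 0) \<le> (if i \<in> F then (1::nat) else 0)"
  show "G \<subseteq> F"
  proof
    fix x assume "x \<in> G" thus "x \<in> F" using h[rule_format, of x] by (cases "x \<in> F") auto
  qed
qed auto

lemma monomial_xF: "F \<subseteq> {1..n} \<Longrightarrow> monomial n (xF F)"
  unfolding monomial_def xF_def by auto

lemma xF_inj: "xF F = xF G \<Longrightarrow> F = G"
  by (metis mdvd_xF order_refl subset_antisym)


lemma facets_gen:
  assumes "\<forall>G\<in>S. G \<subseteq> {1..n} \<and> card G = k"
  shows "facets (gen_complex S) = S"
proof
  show "facets (gen_complex S) \<subseteq> S"
    unfolding facets_def gen_complex_def by auto
  show "S \<subseteq> facets (gen_complex S)"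
  proof
    fix G assume G: "G \<in> S"
    have "\<forall>H\<in>gen_complex S. G \<subseteq> H \<longrightarrow> H = G"
    proof (intro ballI impI)
      fix H assume "H \<in> gen_complex S" "G \<subseteq> H"
      then obtain G' where G': "G' \<in> S" "H \<subseteq> G'" unfolding gen_complex_def by auto
      have fin: "finite G'" using G' assms finite_subset[of G' "{1..n}"] by auto
      have "card G = card G'" using G G' assms by auto
      hence "G = G'" using card_subset_eq[OF fin] \<open>G \<subseteq> H\<close> G' by blast
      thus "H = G" using G' \<open>G \<subseteq> H\<close> by auto
    qed
    moreover have "G \<in> gen_complex S" using G unfolding gen_complex_def by auto
    ultimately show "G \<in> facets (gen_complex S)" unfolding facets_def by auto
  qed
qed

lemma key:
  assumes sc: "simplicial_complex n \<Delta>"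
    and eq: "SR_ideal n \<Delta> = facet_ideal n (gen_complex S)"
    and S: "\<forall>G\<in>S. G \<subseteq> {1..n} \<and> card G = k"
    and F: "F \<subseteq> {1..n}"
  shows "F \<notin> \<Delta> \<longleftrightarrow> (\<exists>G\<in>S. G \<subseteq> F)"
proof -
  have "F \<notin> \<Delta> \<longleftrightarrow> xF F \<in> SR_ideal n \<Delta>"
  proof
    assume "F \<notin> \<Delta>" thus "xF F \<in> SR_ideal n \<Delta>"
      unfolding SR_ideal_def monomial_ideal_def using F monomial_xF[OF F] mdvd_xF[of F F]
      by blast
  next
    assume "xF F \<in> SR_ideal n \<Delta>"
    then obtain G where "G \<notin> \<Delta>" "mdvd (xF G) (xF F)"
      unfolding SR_ideal_def monomial_ideal_def by auto
    thus "F \<notin> \<Delta>" using sc unfolding simplicial_complex_def by (auto simp: mdvd_xF)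
  qed
  also have "\<dots> \<longleftrightarrow> xF F \<in> facet_ideal n (gen_complex S)" using eq by simp
  also have "\<dots> \<longleftrightarrow> (\<exists>G\<in>S. G \<subseteq> F)"
    unfolding facet_ideal_def monomial_ideal_def facets_gen[OF S]
    using monomial_xF[OF F] by (auto simp: mdvd_xF) blast
  finally show ?thesis .
qed

lemma flag_edge:
  assumes sc: "simplicial_complex n \<Sigma>" and fl: "flag n \<Sigma>"
    and F: "F \<subseteq> {1..n}" and nF: "F \<notin> \<Sigma>"
  shows "\<exists>G. G \<subseteq> F \<and> card G = 2 \<and> G \<notin> \<Sigma>"
proof -
  have fin: "finite F" using F finite_subset by blast
  define P where "P = (\<lambda>G. G \<subseteq> F \<and> G \<notin> \<Sigma>)"
  have "P F" using nF P_def by auto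
  then obtain G where G: "P G" "\<And>H. H \<subset> G \<Longrightarrow> \<not> P H"
  proof (induction "card F" arbitrary: F thesis rule: less_induct)
    case (less F)
    show ?case
    proof (cases "\<exists>H. H \<subset> F \<and> P H")
      case True
      then obtain H where H: "H \<subset> F" "P H" by auto
      have "finite F" using less.prems P_def fin finite_subset by auto
      hence "card H < card F" using H psubset_card_mono by auto
      thus ?thesis using less.hyps[OF _ _ H(2)] less.prems by blast
    next
      case False thus ?thesis using less.prems by blast
    qed
  qed
  have "min_nonface n \<Sigma> G"
    unfolding min_nonface_def using G F P_def by auto
  hence "card G = 2" using fl flag_def by auto
  thus ?thesis using G P_def by auto
qed


theorem proposition1p3:
  fixes n l :: nat and \<Sigma> \<Delta> \<Delta>' :: "nat set set"
  assumes "simplicial_complex n \<Sigma>" and "flag n \<Sigma>"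
    and "l \<ge> 1"
    and "simplicial_complex n \<Delta>" and "SR_ideal n \<Delta> = facet_ideal n (coskel n \<Sigma> l)"
    and "simplicial_complex n \<Delta>'" and "SR_ideal n \<Delta>' = facet_ideal n (coskel n \<Sigma> 1)"
  shows "alexander_dual n \<Delta> = skel (alexander_dual n \<Delta>') (int n - int l - 2)"
proof -
  define S where "S = {F. F \<subseteq> {1..n} \<and> card F = l + 1 \<and> F \<notin> \<Sigma>}"
  define S' where "S' = {F. F \<subseteq> {1..n} \<and> card F = 1 + 1 \<and> F \<notin> \<Sigma>}"
  have e1: "coskel n \<Sigma> l = gen_complex S" unfolding coskel_def S_def ..
  have e2: "coskel n \<Sigma> 1 = gen_complex S'" unfolding coskel_def S'_def ..
  have s1: "\<forall>G\<in>S. G \<subseteq> {1..n} \<and> card G = l+1" by (simp add: S_def)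
  have s2: "\<forall>G\<in>S'. G \<subseteq> {1..n} \<and> card G = 1+1" by (simp add: S'_def)
  note kD = key[OF assms(4) assms(5)[unfolded e1] s1]
  note kD' = key[OF assms(6) assms(7)[unfolded e2] s2]
  have D'S: "\<And>F. F \<subseteq> {1..n} \<Longrightarrow> F \<notin> \<Delta>' \<longleftrightarrow> F \<notin> \<Sigma>"
  proof -
    fix F assume F: "F \<subseteq> {1..n}"
    show "F \<notin> \<Delta>' \<longleftrightarrow> F \<notin> \<Sigma>"
    proof
      assume "F \<notin> \<Delta>'"
      then obtain G where "G \<in> S'" "G \<subseteq> F" using kD'[OF F] by auto
      thus "F \<notin> \<Sigma>" using assms(1) unfolding simplicial_complex_def S'_def by auto
    next
      assume "F \<notin> \<Sigma>"
      then obtain G where "G \<subseteq> F" "card G = 2" "G \<notin> \<Sigma>"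
        using flag_edge[OF assms(1,2) F] by auto
      hence "G \<in> S'" using F unfolding S'_def by auto
      thus "F \<notin> \<Delta>'" using kD'[OF F] \<open>G \<subseteq> F\<close> by blast
    qed
  qed
  show ?thesis
  proof (rule set_eqI)
    fix X
    show "X \<in> alexander_dual n \<Delta> \<longleftrightarrow> X \<in> skel (alexander_dual n \<Delta>') (int n - int l - 2)"
    proof
      assume "X \<in> alexander_dual n \<Delta>"
      then obtain F where F: "X = {1..n} - F" "F \<subseteq> {1..n}" "F \<notin> \<Delta>"
        unfolding alexander_dual_def by auto
      then obtain G where G: "G \<in> S" "G \<subseteq> F" using kD by auto
      have Gs: "G \<subseteq> {1..n}" "card G = l + 1" "G \<notin> \<Sigma>" using G S_def by auto
      have "G \<notin> \<Delta>'" using D'S Gs by auto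
      hence H: "{1..n} - G \<in> alexander_dual n \<Delta>'" unfolding alexander_dual_def using Gs by auto
      have "card ({1..n} - G) = n - (l + 1)" using Gs card_Diff_subset[of G "{1..n}"]
        finite_subset[OF Gs(1)] by auto
      moreover have "l + 1 \<le> n" using Gs card_mono[OF _ Gs(1)] by fastforce
      ultimately have "int (card ({1..n} - G)) = int n - int l - 2 + 1" by auto
      moreover have "X \<subseteq> {1..n} - G" using F G by auto
      ultimately show "X \<in> skel (alexander_dual n \<Delta>') (int n - int l - 2)"
        unfolding skel_def gen_complex_def using H by blast
    next
      assume "X \<in> skel (alexander_dual n \<Delta>') (int n - int l - 2)"
      then obtain H where H: "H \<in> alexander_dual n \<Delta>'" "int (card H) = int n - int l - 2 + 1" "X \<subseteq> H"
        unfolding skel_def gen_complex_def by auto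
      then obtain G where G: "H = {1..n} - G" "G \<subseteq> {1..n}" "G \<notin> \<Delta>'"
        unfolding alexander_dual_def by auto
      have fG: "finite G" using G finite_subset by blast
      have "card H = n - card G" using G card_Diff_subset[OF fG G(2)] by auto
      moreover have "card G \<le> n" using card_mono[OF _ G(2)] by fastforce
      ultimately have cG: "card G = l + 1" using H(2) by linarith
      have "G \<notin> \<Sigma>" using D'S G by auto
      hence GS: "G \<in> S" using S_def G cG by auto
      define F where "F = {1..n} - X"
      have "F \<subseteq> {1..n}" "G \<subseteq> F" using F_def G H by auto
      hence "F \<notin> \<Delta>" using kD GS by blast
      moreover have "X = {1..n} - F" using F_def H G by auto
      ultimately show "X \<in> alexander_dual n \<Delta>"
        unfolding alexander_dual_def using \<open>F \<subseteq> {1..n}\<close> by blast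
    qed
  qed
qed

end
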